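(* There exists a continuous, $2$-periodic matrix function $A:\mathbb{R}\to\mathbb{R}^{2\times 2}$ such that for every $t\in\mathbb{R}$ the off-diagonal entries of $A(t)$ are positive and the larger (principal) eigenvalue of $A(t)$ equals $-\tfrac12$, and yet the system $x'=A(t)x$ has a solution $x(t)$ with $\|x(2n)\|\to\infty$ as $n\to\infty$ ($n\in\mathbb{N}$).
   Context: A $2\times2$ real matrix with positive off-diagonal entries has two distinct real eigenvalues; the larger is called its principal eigenvalue. $\|\cdot\|$ denotes the Euclidean norm on $\mathbb{R}^2$. *)

theory Defs
  imports "HOL-Analysis.Analysis"
begin

definition real_eigenvalues :: "real^2^2 \<Rightarrow> real set" where
  "real_eigenvalues M = {l. \<exists>v. v \<noteq> 0 \<and> M *v v = l *\<^sub>R v}"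

definition principal_eigenvalue :: "real^2^2 \<Rightarrow> real" where
  "principal_eigenvalue M = Max (real_eigenvalues M)"

end

theory Submission
  imports Defs
begin

lemma ev_alg:
  fixes p y s l a b :: real
  assumes e1: "(-1/2 - p)*a + y*b = l*a" and e2: "s*p*a + (-1/2 - s*y)*b = l*b"
    and nz: "a \<noteq> 0 \<or> b \<noteq> 0"
  shows "l = -1/2 \<or> l = -1/2 - (p + s * y)"
proof -
  define mu where "mu = l + 1/2"
  have r1: "- p * a + y * b = mu * a" using e1 unfolding mu_def by (simp add: algebra_simps)
  have r2: "s * p * a - s * y * b = mu * b" using e2 unfolding mu_def by (simp add: algebra_simps)
  have r3: "mu * b = - s * (mu * a)"
  proof -
    have "mu * b = - s * (- p * a + y * b)" using r2 by (simp add: algebra_simps)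
    then show ?thesis using r1 by simp
  qed
  show ?thesis
  proof (cases "mu = 0")
    case True then show ?thesis unfolding mu_def by simp
  next
    case False
    have "mu * b = mu * (- s * a)" using r3 by (simp add: algebra_simps)
    then have b: "b = - s * a" using mult_left_cancel[OF False] by blast
    with nz have a: "a \<noteq> 0" by auto
    have "(- p - y * s) * a = mu * a" using r1 unfolding b by (simp add: algebra_simps)
    then have "mu = - p - y * s" using a by simp
    then show ?thesis unfolding mu_def by (simp add: algebra_simps)
  qed
qed

lemma mv2: "(M *v v) $ 1 = M$1$1 * v$1 + M$1$2 * v$2" "(M *v v) $ 2 = M$2$1 * v$1 + M$2$2 * v$2"
  for M :: "real^2^2"
  by (simp_all add: matrix_vector_mult_def sum_2)

lemma eig_lemma:
  fixes M :: "real^2^2" and p y s :: real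
  assumes p: "p > 0" and y: "y > 0" and s: "s > 0"
    and m11: "M$1$1 = -1/2 - p" and m12: "M$1$2 = y"
    and m21: "M$2$1 = s * p" and m22: "M$2$2 = -1/2 - s * y"
  shows "principal_eigenvalue M = -1/2"
proof -
  have ev: "l = -1/2 \<or> l = -1/2 - (p + s * y)" if "l \<in> real_eigenvalues M" for l
  proof -
    have "\<exists>v. v \<noteq> 0 \<and> M *v v = l *\<^sub>R v"
      using that unfolding real_eigenvalues_def mem_Collect_eq .
    then obtain v where v0: "v \<noteq> 0" and mv: "M *v v = l *\<^sub>R v" by (elim exE conjE)
    have e1: "(-1/2 - p) * v$1 + y * v$2 = l * v$1"
      using arg_cong[OF mv, of "\<lambda>w. w$1"] unfolding mv2 vector_scaleR_component m11 m12 by simp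
    have e2: "s * p * v$1 + (-1/2 - s * y) * v$2 = l * v$2"
      using arg_cong[OF mv, of "\<lambda>w. w$2"] unfolding mv2 vector_scaleR_component m21 m22 by simp
    have nz: "v$1 \<noteq> 0 \<or> v$2 \<noteq> 0"
    proof (rule ccontr)
      assume "\<not> (v$1 \<noteq> 0 \<or> v$2 \<noteq> 0)"
      then have "v = 0" unfolding vec_eq_iff forall_2 by simp
      with v0 show False by simp
    qed
    show ?thesis by (rule ev_alg[OF e1 e2 nz])
  qed
  have mem: "-1/2 \<in> real_eigenvalues M"
  proof -
    define v :: "real^2" where "v = (\<chi> i. if i = 1 then y else p)"
    have v1: "v$1 = y" and v2: "v$2 = p" by (simp_all add: v_def)
    have "v \<noteq> 0"
    proof
      assume "v = 0" then have "v$1 = 0" by simp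
      with v1 y show False by simp
    qed
    moreover have "M *v v = (-1/2) *\<^sub>R v"
      unfolding vec_eq_iff forall_2 mv2 vector_scaleR_component v1 v2 m11 m12 m21 m22
      by (simp add: algebra_simps)
    ultimately have "\<exists>v. v \<noteq> 0 \<and> M *v v = (-1/2) *\<^sub>R v" by (intro exI conjI)
    then show ?thesis unfolding real_eigenvalues_def mem_Collect_eq .
  qed
  have sub: "real_eigenvalues M \<subseteq> {-1/2, -1/2 - (p + s * y)}" using ev by blast
  have fin: "finite (real_eigenvalues M)" using finite_subset[OF sub] by simp
  have le: "l \<le> -1/2" if "l \<in> real_eigenvalues M" for l
  proof -
    have "0 < s * y" using s y by simp
    then show ?thesis using ev[OF that] p by auto
  qed
  show ?thesis unfolding principal_eigenvalue_def
    by (rule Max_eqI[OF fin le mem])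
qed


definition fa :: "real \<Rightarrow> real" where "fa t = -8 * cos (pi*t)"
definition fb :: "real \<Rightarrow> real" where "fb t = 15/2 * cos (pi*t) - sin (2*pi*t)"
definition cc :: real where "cc = pi - 1/2"
definition e11 :: "real \<Rightarrow> real" where "e11 t = -1/2 - pi * (9 - 8 * sin (pi*t))"
definition e12 :: "real \<Rightarrow> real" where "e12 t = 10 * pi * exp (fa t - fb t)"
definition e21 :: "real \<Rightarrow> real" where
  "e21 t = (1 - sin (pi*t)/2) * exp (fb t - fa t) * (pi * (9 - 8 * sin (pi*t)))"
definition e22 :: "real \<Rightarrow> real" where "e22 t = -1/2 - 10 * pi * (1 - sin (pi*t)/2)"
definition Am :: "real \<Rightarrow> real^2^2" where
  "Am t = (\<chi> i j. if i = 1 then (if j = 1 then e11 t else e12 t) else (if j = 1 then e21 t else e22 t))"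
definition xs :: "real \<Rightarrow> real^2" where
  "xs t = exp (cc*t + fa t) *\<^sub>R axis 1 1 + exp (cc*t + fb t) *\<^sub>R axis 2 1"

lemma Am_nth: "Am t $ 1 $ 1 = e11 t" "Am t $ 1 $ 2 = e12 t" "Am t $ 2 $ 1 = e21 t" "Am t $ 2 $ 2 = e22 t"
  by (simp_all add: Am_def)

lemma xs_nth: "xs t $ 1 = exp (cc*t + fa t)" "xs t $ 2 = exp (cc*t + fb t)"
  by (simp_all add: xs_def axis_def)


lemma per_sin: "sin (pi * (t + 2)) = sin (pi*t)" "cos (pi * (t + 2)) = cos (pi*t)"
  "sin (2 * pi * (t + 2)) = sin (2*pi*t)"
proof -
  have "pi * (t+2) = pi*t + 2*pi" by (simp add: algebra_simps)
  then show "sin (pi * (t + 2)) = sin (pi*t)" "cos (pi * (t + 2)) = cos (pi*t)" by simp_all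
  have "sin (2*pi * (t+2)) = sin ((2*pi*t + 2*pi) + 2*pi)"
    by (rule arg_cong[where f=sin]) (simp add: algebra_simps)
  also have "\<dots> = sin (2*pi*t)" by (simp only: sin_periodic)
  finally show "sin (2 * pi * (t + 2)) = sin (2*pi*t)" .
qed

lemma fab_per: "fa (t+2) = fa t" "fb (t+2) = fb t"
  by (simp_all only: fa_def fb_def per_sin)

lemma Am_per: "Am (t + 2) = Am t"
  unfolding Am_def e11_def e12_def e21_def e22_def by (simp only: fab_per per_sin)

lemma e_cont: "continuous_on UNIV e11" "continuous_on UNIV e12" "continuous_on UNIV e21" "continuous_on UNIV e22"
  unfolding e11_def[abs_def] e12_def[abs_def] e21_def[abs_def] e22_def[abs_def] fa_def fb_def
  by (intro continuous_intros; simp)+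

lemma Am_cont: "continuous_on UNIV Am"
  unfolding Am_def
proof (intro continuous_on_vec_lambda)
  fix i j :: 2
  show "continuous_on UNIV (\<lambda>x. if i = 1 then (if j = 1 then e11 x else e12 x) else (if j = 1 then e21 x else e22 x))"
    using e_cont by (cases "i = 1"; cases "j = 1") (simp_all add: eta_contract_eq)
qed

lemma Am_pos: "i \<noteq> j \<Longrightarrow> Am t $ i $ j > 0"
proof -
  assume ij: "i \<noteq> j"
  have s: "-1 \<le> sin (pi*t)" "sin (pi*t) \<le> 1" by simp_all
  have s2: "8 * sin (pi*t) < 9" "sin (pi*t) < 2" using s by linarith+
  moreover have "e21 t > 0" unfolding e21_def
    using s2 by (auto intro!: mult_pos_pos)
  moreover have "e12 t > 0" by (simp add: e12_def)
  ultimately show ?thesis using ij exhaust_2[of i] exhaust_2[of j]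
    by (auto simp: Am_def)
qed

lemma Am_eig: "principal_eigenvalue (Am t) = -1/2"
proof (rule eig_lemma[where p = "pi * (9 - 8 * sin (pi*t))" and y = "e12 t"
      and s = "(1 - sin (pi*t)/2) * exp (fb t - fa t)"])
  have s: "-1 \<le> sin (pi*t)" "sin (pi*t) \<le> 1" by simp_all
  have s2: "8 * sin (pi*t) < 9" "sin (pi*t) < 2" using s by linarith+
  show "0 < pi * (9 - 8 * sin (pi * t))" using s2 by (auto intro!: mult_pos_pos)
  show "0 < e12 t" by (simp add: e12_def)
  show "0 < (1 - sin (pi * t) / 2) * exp (fb t - fa t)" using s2 by (auto intro!: mult_pos_pos)
  show "Am t $ 1 $ 1 = - 1 / 2 - pi * (9 - 8 * sin (pi * t))" by (simp add: Am_nth e11_def)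
  show "Am t $ 1 $ 2 = e12 t" by (simp add: Am_nth)
  show "Am t $ 2 $ 1 = (1 - sin (pi * t) / 2) * exp (fb t - fa t) * (pi * (9 - 8 * sin (pi * t)))"
    by (simp add: Am_nth e21_def)
  have "exp (fb t - fa t) * exp (fa t - fb t) = 1" by (simp flip: exp_add)
  then show "Am t $ 2 $ 2 = - 1 / 2 - (1 - sin (pi * t) / 2) * exp (fb t - fa t) * e12 t"
    by (simp add: Am_nth e22_def e12_def algebra_simps)
qed

lemma xs_deriv: "(xs has_vector_derivative (Am t *v xs t)) (at t)"
proof -
  define s where "s = sin (pi*t)"
  define xA where "xA = exp (cc*t + fa t)"
  define xB where "xB = exp (cc*t + fb t)"
  define dA where "dA = xA * (cc + 8*pi * s)"
  define dB where "dB = xB * (cc - 15/2*pi * s - 2*pi*cos (2*pi*t))"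
  have d1: "((\<lambda>t. exp (cc*t + fa t)) has_field_derivative dA) (at t)"
    unfolding dA_def xA_def s_def fa_def
    by (auto intro!: derivative_eq_intros simp: algebra_simps)
  have d2: "((\<lambda>t. exp (cc*t + fb t)) has_field_derivative dB) (at t)"
    unfolding dB_def xB_def s_def fb_def
    by (auto intro!: derivative_eq_intros simp: algebra_simps)
  have hv: "(xs has_vector_derivative (dA *\<^sub>R axis 1 1 + dB *\<^sub>R axis 2 1)) (at t)"
  proof -
    have "((\<lambda>t. exp (cc*t + fa t) *\<^sub>R (axis 1 1 :: real^2) + exp (cc*t + fb t) *\<^sub>R axis 2 1)
       has_vector_derivative
       ((exp (cc*t + fa t) *\<^sub>R 0 + dA *\<^sub>R axis 1 1) + (exp (cc*t + fb t) *\<^sub>R 0 + dB *\<^sub>R axis 2 1))) (at t)"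
      by (intro has_vector_derivative_add has_vector_derivative_scaleR d1 d2 has_vector_derivative_const)
    then show ?thesis unfolding xs_def[abs_def] by simp
  qed
  have c2: "cos (2*pi*t) = 1 - 2 * s^2"
    using cos_double_sin[of "pi*t"] unfolding s_def by (simp add: mult.assoc)
  have ex1: "exp (fa t - fb t) * xB = xA"
    unfolding xA_def xB_def by (simp flip: exp_add)
  have ex2: "exp (fb t - fa t) * xA = xB"
    unfolding xA_def xB_def by (simp flip: exp_add)
  have r1: "e11 t * xA + e12 t * xB = dA"
  proof -
    have "e12 t * xB = 10 * pi * xA" using ex1 unfolding e12_def by (simp add: mult.assoc)
    then show ?thesis unfolding e11_def dA_def cc_def s_def by (simp add: algebra_simps)
  qed
  have r2: "e21 t * xA + e22 t * xB = dB"
  proof -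
    have "e21 t * xA = (1 - s/2) * (pi * (9 - 8 * s)) * (exp (fb t - fa t) * xA)"
      unfolding e21_def s_def by (simp add: mult_ac)
    also have "\<dots> = (1 - s/2) * (pi * (9 - 8 * s)) * xB" using ex2 by simp
    finally have "e21 t * xA = (1 - s/2) * (pi * (9 - 8 * s)) * xB" .
    then show ?thesis unfolding e22_def dB_def cc_def c2 s_def[symmetric]
      by (simp add: algebra_simps power2_eq_square)
  qed
  have "Am t *v xs t = dA *\<^sub>R axis 1 1 + dB *\<^sub>R axis 2 1"
    using r1 r2
    by (simp add: vec_eq_iff forall_2 matrix_vector_mult_def sum_2 Am_nth xs_nth xA_def xB_def axis_def)
  with hv show ?thesis by simp
qed

lemma xs_lim: "filterlim (\<lambda>n::nat. norm (xs (2 * real n))) at_top sequentially"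
proof (rule filterlim_at_top_mono[OF filterlim_real_sequentially])
  show "\<forall>\<^sub>F n in sequentially. real n \<le> norm (xs (2 * real n))"
  proof (rule eventually_sequentiallyI[of 2])
    fix n :: nat assume n: "2 \<le> n"
    have cosn: "cos (pi * (2 * real n)) = 1"
      by (metis cos_npi_int cos_2npi mult.commute mult.left_commute of_nat_numeral)
    have "exp (cc * (2 * real n) + fa (2 * real n)) \<ge> 1 + (cc * (2 * real n) + fa (2 * real n))"
      by (rule exp_ge_add_one_self)
    moreover have "fa (2 * real n) = -8" unfolding fa_def using cosn by simp
    moreover have "cc * (2 * real n) - 7 \<ge> real n"
    proof -
      have "cc \<ge> 3 - 1/2" unfolding cc_def using pi_gt3 by simp
      then have "5 \<le> 2 * cc" by simp
      then have "5 * real n \<le> (2 * cc) * real n" by (rule mult_right_mono) simp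
      then have "cc * (2 * real n) \<ge> 5 * real n" by (simp add: mult_ac)
      moreover have "real n \<ge> 2" using n by simp
      ultimately show ?thesis by linarith
    qed
    moreover have "exp (cc * (2 * real n) + fa (2 * real n)) \<le> norm (xs (2 * real n))"
      using component_le_norm_cart[of "xs (2 * real n)" 1] by (simp add: xs_nth)
    ultimately show "real n \<le> norm (xs (2 * real n))" by linarith
  qed
qed

theorem mainTheorem2:
  shows "\<exists>A :: real \<Rightarrow> real^2^2.
     continuous_on UNIV A \<and>
     (\<forall>t. A (t + 2) = A t) \<and>
     (\<forall>t. \<forall>i j. i \<noteq> j \<longrightarrow> A t $ i $ j > 0) \<and>
     (\<forall>t. principal_eigenvalue (A t) = - 1 / 2) \<and>
     (\<exists>x :: real \<Rightarrow> real^2.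
        (\<forall>t. (x has_vector_derivative (A t *v x t)) (at t)) \<and>
        filterlim (\<lambda>n::nat. norm (x (2 * real n))) at_top sequentially)"
  apply (rule exI[of _ Am])
  apply (intro conjI)
  subgoal by (rule Am_cont)
  subgoal using Am_per by simp
  subgoal using Am_pos by simp
  subgoal using Am_eig by simp
  apply (rule exI[of _ xs])
  using xs_deriv xs_lim by simp

end
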